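(* Let $s\in\mathscr S_+^\circ$ with $\operatorname{supp}(s)=\{d_1>\cdots>d_m\}$, and let $s'\in\mathscr S_+$ satisfy $\operatorname{supp}(s')\subsetneq\operatorname{supp}(s)$ and $\operatorname{supp}(s)\setminus\operatorname{supp}(s')\subseteq\{d_{2i}: 1\le 2i\le m\}$. Then $s'\notin\mathscr S_+^\circ$ and $\lfloor s'\rfloor=s$. In particular $s\prec s'$ and $\mathfrak d(s')=\mathfrak d(s)$.
   Context: $\omega=\{0,1,\dots\}$, $[m]=\{1,\dots,m\}$. A finite sign sequence is $s\in\{-,0,+\}^\omega$ with finitely many nonzero entries; $\mathscr S$ their set; $\operatorname{supp}(s)=\{i:s_i\ne0\}$; $\mathscr S_+=\mathscr S\cap\{0,+\}^\omega$. $\mathrm{SC}(t)$ = number of pairs $i<j$ with $\{t_i,t_j\}=\{-,+\}$ and $t_k=0$ for $i<k<j$. $\mathfrak d(s)=\max\{\mathrm{SC}(t):t\in\mathscr S,\ t_i\in\{-,0,s_i\}\ \forall i\}$. $\mathscr S_+^\circ=\{s\in\mathscr S_+:\mathfrak d(s)=\#\operatorname{supp}(s)\}$. Interval decomposition of $s\in\mathscr S_+$: $\operatorname{supp}(s)=X_0\amalg\cdots\amalg X_k$ into intervals with $0\in X_0$ if $0\in\operatorname{supp}(s)$ else $X_0=\emptyset$, $X_i\neq\emptyset$ for $i\in[k]$, $\min X_i-\max X_{i-1}\ge2$ ($\max\emptyset=-\infty$). $\lfloor X_i\rfloor=\{\min X_i-1\}\amalg X_i$ if $\#X_i$ odd,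 else $X_i$; $\lceil X_i\rceil=X_i\amalg\{\max X_i+1\}$ if $\#X_i$ odd, else $X_i$; $\operatorname{supp}(\lfloor s\rfloor)=X_0\amalg\lfloor X_1\rfloor\amalg\cdots\amalg\lfloor X_k\rfloor$, $\operatorname{supp}(\lceil s\rceil)=X_0\amalg\lceil X_1\rceil\amalg\cdots\amalg\lceil X_k\rceil$. On $\mathscr S_+^\circ$: $s\preceq_0 s'$ iff, writing supports in decreasing order $\{d_1>\cdots>d_m\}$, $\{d'_1>\cdots>d'_{m'}\}$, $m\le m'$ and $d_i\le d'_i$ for $i\in[m]$. On $\mathscr S_+$: $s\preceq s'$ iff $s=s'$, or $s\ne s'$ and $\lceil s\rceil\preceq_0\lfloor s'\rfloor$; $s\prec s'$ means $s\preceq s'$, $s\neq s'$. *)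

theory Defs
  imports Main
begin

datatype sign = Neg | Zero | Pos

type_synonym sseq = "nat \<Rightarrow> sign"

definition supp :: "sseq \<Rightarrow> nat set" where
  "supp s = {i. s i \<noteq> Zero}"

definition SS :: "sseq set" where
  "SS = {s. finite (supp s)}"

definition SSplus :: "sseq set" where
  "SSplus = {s. s \<in> SS \<and> (\<forall>i. s i \<in> {Zero, Pos})}"

definition SC :: "sseq \<Rightarrow> nat" where
  "SC t = card {(i, j). i < j \<and> {t i, t j} = {Neg, Pos} \<and> (\<forall>k. i < k \<and> k < j \<longrightarrow> t k = Zero)}"

definition dd :: "sseq \<Rightarrow> nat" where
  "dd s = Max {SC t | t. t \<in> SS \<and> (\<forall>i. t i \<in> {Neg, Zero, s i})}"

definition SSplus_circ :: "sseq set" where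
  "SSplus_circ = {s. s \<in> SSplus \<and> dd s = card (supp s)}"

text \<open>the support listed in decreasing order: d_1 > ... > d_m is (dec_supp s) ! 0, ..., ! (m-1)\<close>
definition dec_supp :: "sseq \<Rightarrow> nat list" where
  "dec_supp s = rev (sorted_list_of_set (supp s))"

text \<open>the blocks X_0, X_1, ..., X_k of the interval decomposition of a set A of naturals
  are exactly its maximal intervals (X_0 being the one containing 0, if any)\<close>
definition max_interval :: "nat set \<Rightarrow> nat set \<Rightarrow> bool" where
  "max_interval A X \<longleftrightarrow> (\<exists>a b. a \<le> b \<and> X = {a..b} \<and> X \<subseteq> A \<and>
      (a = 0 \<or> a - 1 \<notin> A) \<and> b + 1 \<notin> A)"

definition of_supp :: "nat set \<Rightarrow> sseq" where
  "of_supp A = (\<lambda>i. if i \<in> A then Pos else Zero)"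

definition sfloor :: "sseq \<Rightarrow> sseq" where
  "sfloor s = of_supp (supp s \<union>
     {Min X - 1 | X. max_interval (supp s) X \<and> 0 \<notin> X \<and> odd (card X)})"

definition sceil :: "sseq \<Rightarrow> sseq" where
  "sceil s = of_supp (supp s \<union>
     {Max X + 1 | X. max_interval (supp s) X \<and> 0 \<notin> X \<and> odd (card X)})"

definition preceq0 :: "sseq \<Rightarrow> sseq \<Rightarrow> bool" where
  "preceq0 s s' \<longleftrightarrow> s \<in> SSplus_circ \<and> s' \<in> SSplus_circ \<and>
     length (dec_supp s) \<le> length (dec_supp s') \<and>
     (\<forall>i < length (dec_supp s). dec_supp s ! i \<le> dec_supp s' ! i)"

definition spreceq :: "sseq \<Rightarrow> sseq \<Rightarrow> bool" where
  "spreceq s s' \<longleftrightarrow> s \<in> SSplus \<and> s' \<in> SSplus \<and>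
     (s = s' \<or> (s \<noteq> s' \<and> preceq0 (sceil s) (sfloor s')))"

definition sprec :: "sseq \<Rightarrow> sseq \<Rightarrow> bool" where
  "sprec s s' \<longleftrightarrow> spreceq s s' \<and> s \<noteq> s'"

end

theory Submission
  imports Defs
begin


definition uu :: "nat set \<Rightarrow> nat \<Rightarrow> nat" where
  "uu D x = card {z. x < z \<and> {x..z} \<subseteq> D}"
definition rk :: "nat set \<Rightarrow> nat \<Rightarrow> nat" where
  "rk D x = card {z\<in>D. x < z}"
definition tt :: "nat set \<Rightarrow> sseq" where
  "tt D x = (if x \<in> D then (if even (uu D x) then Pos else Neg)
     else if Suc x \<in> D \<or> (0 < x \<and> x - 1 \<in> D) then Neg else Zero)"

lemma uu_step:
  assumes "finite D" "x \<in> D" "Suc x \<in> D"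
  shows "uu D x = Suc (uu D (Suc x))"
proof -
  have eq: "{z. x < z \<and> {x..z} \<subseteq> D} = insert (Suc x) {z. Suc x < z \<and> {Suc x..z} \<subseteq> D}"
  proof (intro equalityI subsetI)
    fix z assume "z \<in> {z. x < z \<and> {x..z} \<subseteq> D}"
    then show "z \<in> insert (Suc x) {z. Suc x < z \<and> {Suc x..z} \<subseteq> D}" by auto
  next
    fix z assume z: "z \<in> insert (Suc x) {z. Suc x < z \<and> {Suc x..z} \<subseteq> D}"
    show "z \<in> {z. x < z \<and> {x..z} \<subseteq> D}"
    proof (cases "z = Suc x")
      case True
      then have "{x..z} = {x, Suc x}" by auto
      then show ?thesis using assms True by auto
    next
      case False
      then have "Suc x < z" "{Suc x..z} \<subseteq> D" using z by auto
      moreover have "{x..z} = insert x {Suc x..z}" using \<open>Suc x < z\<close> by auto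
      ultimately show ?thesis using assms by auto
    qed
  qed
  have fin: "finite {z. Suc x < z \<and> {Suc x..z} \<subseteq> D}"
    by (rule finite_subset[OF _ assms(1)]) auto
  show ?thesis unfolding uu_def eq using fin by simp
qed

lemma uu_top:
  assumes "Suc x \<notin> D" shows "uu D x = 0"
proof -
  have "{z. x < z \<and> {x..z} \<subseteq> D} = {}"
  proof (rule ccontr)
    assume "{z. x < z \<and> {x..z} \<subseteq> D} \<noteq> {}"
    then obtain z where "x < z" "{x..z} \<subseteq> D" by auto
    then have "Suc x \<in> D" by auto
    then show False using assms by simp
  qed
  then show ?thesis unfolding uu_def by (metis card.empty)
qed

lemma uu_interval:
  assumes "finite D" "x \<le> y" "{x..y} \<subseteq> D"
  shows "uu D x = uu D y + (y - x)"
  using assms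
proof (induction "y - x" arbitrary: x)
  case 0 then show ?case by simp
next
  case (Suc n)
  then have "x < y" by simp
  then have "{Suc x..y} \<subseteq> D" "x \<in> D" "Suc x \<in> D" using Suc.prems by auto
  then have "uu D (Suc x) = uu D y + (y - Suc x)"
    using Suc.hyps(1)[of "Suc x"] Suc.hyps(2) Suc.prems \<open>x < y\<close> by auto
  then show ?case using uu_step[OF Suc.prems(1) \<open>x \<in> D\<close> \<open>Suc x \<in> D\<close>] \<open>x < y\<close> by simp
qed

lemma rk_min:
  assumes "finite D" "{y\<in>D. x < y} \<noteq> {}"
  shows "rk D x = Suc (rk D (Min {y\<in>D. x < y}))"
proof -
  define A where "A = {y\<in>D. x < y}"
  have finA: "finite A" using assms(1) unfolding A_def by auto
  have mA: "Min A \<in> A" using Min_in[OF finA] assms(2) unfolding A_def by auto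
  have eq: "A = insert (Min A) {z\<in>D. Min A < z}"
  proof (intro equalityI subsetI)
    fix z assume "z \<in> A"
    then have "Min A \<le> z" using finA by auto
    then show "z \<in> insert (Min A) {z\<in>D. Min A < z}" using \<open>z \<in> A\<close> unfolding A_def by auto
  next
    fix z assume "z \<in> insert (Min A) {z\<in>D. Min A < z}"
    then show "z \<in> A" using mA unfolding A_def by auto
  qed
  have "finite {z\<in>D. Min A < z}" using assms(1) by auto
  then have "card A = Suc (card {z\<in>D. Min A < z})"
    by (subst eq) simp
  then show ?thesis unfolding rk_def A_def by simp
qed

lemma parity:
  assumes fin: "finite D"
    and ev: "\<And>a. a \<in> D \<Longrightarrow> 0 < a \<Longrightarrow> a - 1 \<notin> D \<Longrightarrow> odd (uu D a)"
  shows "x \<in> D \<Longrightarrow> even (rk D x + uu D x)"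
proof (induction "rk D x" arbitrary: x rule: less_induct)
  case less
  show ?case
  proof (cases "{y\<in>D. x < y} = {}")
    case True
    then have "rk D x = 0" unfolding rk_def by (metis card.empty)
    moreover have "Suc x \<notin> D" using True by auto
    ultimately show ?thesis using uu_top by simp
  next
    case False
    define a where "a = Min {y\<in>D. x < y}"
    have fA: "finite {y\<in>D. x < y}" using fin by auto
    have aA: "a \<in> D" "x < a" using Min_in[OF fA False] unfolding a_def by auto
    have amin: "\<And>y. y \<in> D \<Longrightarrow> x < y \<Longrightarrow> a \<le> y" using fA unfolding a_def by auto
    have r: "rk D x = Suc (rk D a)" using rk_min[OF fin False] unfolding a_def by simp
    have IH: "even (rk D a + uu D a)" using less.hyps[of a] r aA by simp
    show ?thesis
    proof (cases "a = Suc x")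
      case True
      then have "uu D x = Suc (uu D a)" using uu_step[OF fin less.prems] aA by simp
      then show ?thesis using r IH by simp
    next
      case False
      then have "Suc x \<notin> D" using amin aA by fastforce
      then have "uu D x = 0" by (rule uu_top)
      have "a - 1 \<notin> D"
      proof
        assume "a - 1 \<in> D"
        moreover have "x < a - 1" using aA False by auto
        ultimately have "a \<le> a - 1" using amin by blast
        then show False using aA by simp
      qed
      then have "odd (uu D a)" using ev aA by simp
      then show ?thesis using r IH \<open>uu D x = 0\<close> by simp
    qed
  qed
qed



definition pairs :: "sseq \<Rightarrow> (nat \<times> nat) set" where
  "pairs t = {(i, j). i < j \<and> {t i, t j} = {Neg, Pos} \<and> (\<forall>k. i < k \<and> k < j \<longrightarrow> t k = Zero)}"

lemma pair_nz: "{a, b} = {Neg, Pos} \<Longrightarrow> a \<noteq> Zero \<and> b \<noteq> Zero \<and> (a = Pos \<or> b = Pos)"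
  by (cases a; cases b) (auto simp: doubleton_eq_iff)

lemma SC_pairs: "SC t = card (pairs t)" unfolding SC_def pairs_def by simp

lemma SC_le:
  assumes "finite P" "\<And>i. t i = Pos \<Longrightarrow> i \<in> P"
  shows "SC t \<le> 2 * card P"
proof -
  define f where "f = (\<lambda>(i::nat, j::nat). if t i = Pos then (i, True) else (j, False))"
  have inj: "inj_on f (pairs t)"
  proof (rule inj_onI)
    fix p q assume p: "p \<in> pairs t" and q: "q \<in> pairs t" and fe: "f p = f q"
    obtain i j where pij: "p = (i, j)" by (cases p)
    obtain i' j' where qij: "q = (i', j')" by (cases q)
    have P: "i < j" "{t i, t j} = {Neg, Pos}" "\<And>k. i < k \<Longrightarrow> k < j \<Longrightarrow> t k = Zero"
      using p pij unfolding pairs_def by auto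
    have Q: "i' < j'" "{t i', t j'} = {Neg, Pos}" "\<And>k. i' < k \<Longrightarrow> k < j' \<Longrightarrow> t k = Zero"
      using q qij unfolding pairs_def by auto
    have nzj: "t j \<noteq> Zero" "t i \<noteq> Zero" "t j' \<noteq> Zero" "t i' \<noteq> Zero"
      using pair_nz[OF P(2)] pair_nz[OF Q(2)] by auto
    show "p = q"
    proof (cases "t i = Pos")
      case True
      then have "t i' = Pos" "i = i'" using fe pij qij unfolding f_def
        by (auto split: if_splits)
      have "j = j'"
      proof (rule ccontr)
        assume "j \<noteq> j'"
        then consider "j < j'" | "j' < j" by linarith
        then show False
        proof cases
          case 1 then show ?thesis using Q(3)[of j] P(1) \<open>i = i'\<close> nzj by auto
        next
          case 2 then show ?thesis using P(3)[of j'] Q(1) \<open>i = i'\<close> nzj by auto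
        qed
      qed
      then show ?thesis using pij qij \<open>i = i'\<close> by simp
    next
      case False
      then have "t i' \<noteq> Pos" "j = j'" using fe pij qij unfolding f_def
        by (auto split: if_splits)
      have "i = i'"
      proof (rule ccontr)
        assume "i \<noteq> i'"
        then consider "i < i'" | "i' < i" by linarith
        then show False
        proof cases
          case 1 then show ?thesis using P(3)[of i'] Q(1) \<open>j = j'\<close> nzj by auto
        next
          case 2 then show ?thesis using Q(3)[of i] P(1) \<open>j = j'\<close> nzj by auto
        qed
      qed
      then show ?thesis using pij qij \<open>j = j'\<close> by simp
    qed
  qed
  have img: "f ` pairs t \<subseteq> P \<times> (UNIV :: bool set)"
  proof
    fix x assume "x \<in> f ` pairs t"
    then obtain i j where ij: "(i, j) \<in> pairs t" "x = f (i, j)" by auto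
    then have "{t i, t j} = {Neg, Pos}" unfolding pairs_def by auto
    then have "t i = Pos \<or> t j = Pos" using pair_nz by blast
    then show "x \<in> P \<times> UNIV" using ij assms(2) unfolding f_def by auto
  qed
  have "card (pairs t) \<le> card (P \<times> (UNIV :: bool set))"
    by (rule card_inj_on_le[OF inj img]) (simp add: assms(1))
  also have "\<dots> = 2 * card P" by (simp add: card_cartesian_product)
  finally show ?thesis by (simp add: SC_pairs)
qed

definition adm :: "sseq \<Rightarrow> nat set" where
  "adm s = {SC t | t. t \<in> SS \<and> (\<forall>i. t i \<in> {Neg, Zero, s i})}"

lemma dd_adm: "dd s = Max (adm s)" unfolding dd_def adm_def by simp

lemma adm_fin:
  assumes "s \<in> SSplus" shows "finite (adm s)"
proof -
  have fs: "finite (supp s)" using assms unfolding SSplus_def SS_def by auto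
  have "adm s \<subseteq> {..2 * card (supp s)}"
  proof
    fix n assume "n \<in> adm s"
    then obtain t where t: "n = SC t" "\<forall>i. t i \<in> {Neg, Zero, s i}" unfolding adm_def by auto
    have "\<And>i. t i = Pos \<Longrightarrow> i \<in> supp s"
    proof -
      fix i assume "t i = Pos"
      then have "s i = Pos" using t(2)[rule_format, of i] by simp
      then show "i \<in> supp s" unfolding supp_def by simp
    qed
    then show "n \<in> {..2 * card (supp s)}" using SC_le[OF fs] t(1) by auto
  qed
  then show ?thesis by (rule finite_subset) simp
qed

lemma dd_ge:
  assumes "s \<in> SSplus" "t \<in> SS" "\<And>i. t i \<in> {Neg, Zero, s i}"
  shows "SC t \<le> dd s"
proof -
  have "SC t \<in> adm s" unfolding adm_def using assms by blast
  then show ?thesis unfolding dd_adm by (rule Max_ge[OF adm_fin[OF assms(1)]])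
qed

lemma SC_zero: "SC (\<lambda>_. Zero) = 0"
  unfolding SC_def by simp

lemma dd_mono:
  assumes "s \<in> SSplus" "s' \<in> SSplus" "supp s' \<subseteq> supp s"
  shows "dd s' \<le> dd s"
proof -
  have sub: "adm s' \<subseteq> adm s"
  proof
    fix n assume "n \<in> adm s'"
    then obtain t where t: "n = SC t" "t \<in> SS" "\<forall>i. t i \<in> {Neg, Zero, s' i}" unfolding adm_def by auto
    have "\<forall>i. t i \<in> {Neg, Zero, s i}"
    proof
      fix i
      show "t i \<in> {Neg, Zero, s i}"
      proof (cases "t i = Pos")
        case True
        then have "s' i = Pos" using t(3)[rule_format, of i] by simp
        then have "i \<in> supp s'" unfolding supp_def by simp
        then have "i \<in> supp s" using assms(3) by blast
        then have "s i = Pos" using assms(1) unfolding supp_def SSplus_def by auto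
        then show ?thesis using True by simp
      next
        case False
        then show ?thesis using t(3) by (cases "t i") auto
      qed
    qed
    then show "n \<in> adm s" using t unfolding adm_def by auto
  qed
  have ne: "adm s' \<noteq> {}"
  proof -
    have "(\<lambda>_. Zero) \<in> SS" unfolding SS_def supp_def by simp
    then have "SC (\<lambda>_. Zero) \<in> adm s'" unfolding adm_def by auto
    then show ?thesis by auto
  qed
  show ?thesis unfolding dd_adm by (rule Max_mono[OF sub ne adm_fin[OF assms(1)]])
qed

lemma dec_rank:
  assumes "finite D" "k < length (rev (sorted_list_of_set D))"
  shows "rk D (rev (sorted_list_of_set D) ! k) = k"
proof -
  define xs where "xs = rev (sorted_list_of_set D)"
  have sw: "sorted_wrt (>) xs" unfolding xs_def sorted_wrt_rev
    using strict_sorted_list_of_set[of D] by simp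
  have dist: "distinct xs" unfolding xs_def by simp
  have setxs: "set xs = D" unfolding xs_def using assms(1) by simp
  have kl: "k < length xs" using assms(2) xs_def by simp
  have eq: "{z\<in>D. xs ! k < z} = (\<lambda>i. xs ! i) ` {..<k}"
  proof (intro equalityI subsetI)
    fix z assume "z \<in> {z\<in>D. xs ! k < z}"
    then obtain i where i: "i < length xs" "z = xs ! i" "xs ! k < z" using setxs by (auto simp: in_set_conv_nth)
    have "i < k"
    proof (rule ccontr)
      assume "\<not> i < k"
      then have "k = i \<or> k < i" by linarith
      then show False using sorted_wrt_nth_less[OF sw _ i(1), of k] i by auto
    qed
    then show "z \<in> (\<lambda>i. xs ! i) ` {..<k}" using i by auto
  next
    fix z assume "z \<in> (\<lambda>i. xs ! i) ` {..<k}"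
    then obtain i where i: "i < k" "z = xs ! i" by auto
    then show "z \<in> {z\<in>D. xs ! k < z}"
      using sorted_wrt_nth_less[OF sw i(1) kl] kl setxs by auto
  qed
  have "inj_on (\<lambda>i. xs ! i) {..<k}" using dist kl
    by (auto simp: inj_on_def nth_eq_iff_index_eq)
  then have "card {z\<in>D. xs ! k < z} = k" unfolding eq by (simp add: card_image)
  then show ?thesis unfolding rk_def xs_def by simp
qed



lemma tt_SS: assumes "finite D" shows "tt D \<in> SS"
proof -
  have "supp (tt D) \<subseteq> D \<union> Suc ` D \<union> (\<lambda>y. y - 1) ` D"
  proof
    fix x assume "x \<in> supp (tt D)"
    then have "tt D x \<noteq> Zero" unfolding supp_def by simp
    then have "x \<in> D \<or> Suc x \<in> D \<or> (0 < x \<and> x - 1 \<in> D)" unfolding tt_def by (auto split: if_splits)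
    then consider "x \<in> D" | "Suc x \<in> D" | "0 < x \<and> x - 1 \<in> D" by blast
    then show "x \<in> D \<union> Suc ` D \<union> (\<lambda>y. y - 1) ` D"
    proof cases
      case 1 then show ?thesis by blast
    next
      case 2
      have "x \<in> (\<lambda>y. y - 1) ` D" by (rule image_eqI[where x="Suc x"]) (use 2 in auto)
      then show ?thesis by blast
    next
      case 3
      have "x \<in> Suc ` D" by (rule image_eqI[where x="x - 1"]) (use 3 in auto)
      then show ?thesis by blast
    qed
  qed
  then show ?thesis unfolding SS_def using assms by (auto intro: finite_subset)
qed

lemma tt_pos: "tt D i = Pos \<Longrightarrow> i \<in> D \<and> even (uu D i)"
  unfolding tt_def by (auto split: if_splits)

lemma tt_pairs:
  assumes "finite D" "x \<in> D" shows "(x, Suc x) \<in> pairs (tt D)"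
proof -
  have a: "tt D x = (if even (uu D x) then Pos else Neg)" unfolding tt_def using assms by simp
  have "{tt D x, tt D (Suc x)} = {Neg, Pos}"
  proof (cases "Suc x \<in> D")
    case True
    have u: "uu D x = Suc (uu D (Suc x))" using uu_step[OF assms True] .
    have b: "tt D (Suc x) = (if even (uu D (Suc x)) then Pos else Neg)" using True unfolding tt_def by simp
    show ?thesis using a b u by (cases "even (uu D (Suc x))") (simp_all add: insert_commute)
  next
    case False
    have u: "uu D x = 0" using False by (rule uu_top)
    have b: "tt D (Suc x) = Neg" using False assms unfolding tt_def by simp
    show ?thesis using a b u by (simp add: insert_commute)
  qed
  moreover have "\<forall>k. x < k \<and> k < Suc x \<longrightarrow> tt D k = Zero" by auto
  ultimately show ?thesis unfolding pairs_def by simp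
qed

lemma tt_bad:
  assumes "a \<in> D" "0 < a" "a - 1 \<notin> D" "even (uu D a)"
  shows "(a - 1, a) \<in> pairs (tt D)"
proof -
  have e: "Suc (a - 1) = a" using assms(2) by simp
  have "tt D (a - 1) = Neg" using assms(1,3) e unfolding tt_def by simp
  moreover have "tt D a = Pos" using assms(1,4) unfolding tt_def by simp
  moreover have "\<forall>k. a - 1 < k \<and> k < a \<longrightarrow> tt D k = Zero" by auto
  moreover have "a - 1 < a" using assms(2) by simp
  ultimately show ?thesis unfolding pairs_def by (simp add: insert_commute)
qed

lemma pairs_fin: assumes "t \<in> SS" shows "finite (pairs t)"
proof -
  have "pairs t \<subseteq> supp t \<times> supp t"
  proof
    fix p assume p: "p \<in> pairs t"
    obtain i j where ij: "p = (i, j)" by (cases p)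
    have "{t i, t j} = {Neg, Pos}" using p ij unfolding pairs_def by simp
    then have "t i \<noteq> Zero" "t j \<noteq> Zero" using pair_nz by blast+
    then show "p \<in> supp t \<times> supp t" using ij unfolding supp_def by simp
  qed
  then show ?thesis using assms unfolding SS_def by (auto intro: finite_subset)
qed

lemma SC_tt: assumes "finite D" shows "card D \<le> SC (tt D)"
proof -
  have "card ((\<lambda>x. (x, Suc x)) ` D) \<le> card (pairs (tt D))"
    by (rule card_mono[OF pairs_fin[OF tt_SS[OF assms]]]) (use tt_pairs assms in auto)
  moreover have "card ((\<lambda>x. (x, Suc x)) ` D) = card D" by (rule card_image) (auto simp: inj_on_def)
  ultimately show ?thesis by (simp add: SC_pairs)
qed

lemma SC_tt_bad:
  assumes "finite D" "a \<in> D" "0 < a" "a - 1 \<notin> D" "even (uu D a)"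
  shows "card D + 1 \<le> SC (tt D)"
proof -
  let ?A = "insert (a - 1, a) ((\<lambda>x. (x, Suc x)) ` D)"
  have "card ?A \<le> card (pairs (tt D))"
    by (rule card_mono[OF pairs_fin[OF tt_SS[OF assms(1)]]]) (use tt_pairs tt_bad assms in auto)
  moreover have "card ((\<lambda>x. (x, Suc x)) ` D) = card D" by (rule card_image) (auto simp: inj_on_def)
  moreover have "(a - 1, a) \<notin> (\<lambda>x. (x, Suc x)) ` D" using assms by auto
  ultimately show ?thesis using assms(1) by (simp add: SC_pairs)
qed



lemma of_supp_supp: assumes "s \<in> SSplus" shows "of_supp (supp s) = s"
proof
  fix i
  have "s i \<in> {Zero, Pos}" using assms unfolding SSplus_def by auto
  then show "of_supp (supp s) i = s i" unfolding of_supp_def supp_def by auto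
qed

theorem mainTheorem12:
  fixes s s' :: sseq
  assumes "s \<in> SSplus_circ"
    and "s' \<in> SSplus"
    and "supp s' \<subset> supp s"
    and "supp s - supp s' \<subseteq>
           {dec_supp s ! (2 * i - 1) | i. 1 \<le> 2 * i \<and> 2 * i \<le> length (dec_supp s)}"
  shows "s' \<notin> SSplus_circ \<and> sfloor s' = s \<and> sprec s s' \<and> dd s' = dd s"
proof -
  define D where "D = supp s"
  define S' where "S' = supp s'"
  have sP: "s \<in> SSplus" and dds: "dd s = card D"
    using assms(1) unfolding SSplus_circ_def D_def by auto
  have finD: "finite D" using sP unfolding SSplus_def SS_def D_def by auto
  have sub: "S' \<subset> D" using assms(3) unfolding D_def S'_def .
  have sposD: "\<And>i. i \<in> D \<Longrightarrow> s i = Pos"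
    using sP unfolding SSplus_def D_def supp_def by auto
  have adm_s: "\<And>i. tt D i \<in> {Neg, Zero, s i}"
  proof -
    fix i show "tt D i \<in> {Neg, Zero, s i}"
    proof (cases "tt D i")
      case Pos then show ?thesis using tt_pos[OF Pos] sposD by simp
    qed simp_all
  qed
  have ev: "\<And>a. a \<in> D \<Longrightarrow> 0 < a \<Longrightarrow> a - 1 \<notin> D \<Longrightarrow> odd (uu D a)"
  proof (rule ccontr)
    fix a assume a: "a \<in> D" "0 < a" "a - 1 \<notin> D" "\<not> odd (uu D a)"
    then have "card D + 1 \<le> SC (tt D)" using SC_tt_bad[OF finD] by simp
    also have "\<dots> \<le> dd s" by (rule dd_ge[OF sP tt_SS[OF finD] adm_s])
    finally show False using dds by simp
  qed
  have par: "\<And>x. x \<in> D \<Longrightarrow> even (rk D x + uu D x)"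
    using parity[OF finD ev] by blast
  have Rrk: "\<And>r. r \<in> D \<Longrightarrow> r \<notin> S' \<Longrightarrow> odd (rk D r)"
  proof -
    fix r assume "r \<in> D" "r \<notin> S'"
    then obtain i where i: "r = dec_supp s ! (2 * i - 1)" "1 \<le> 2 * i" "2 * i \<le> length (dec_supp s)"
      using assms(4) unfolding D_def S'_def by blast
    have "2 * i - 1 < length (rev (sorted_list_of_set D))" using i unfolding dec_supp_def D_def by simp
    then have "rk D r = 2 * i - 1" using dec_rank[OF finD] i(1) unfolding dec_supp_def D_def by simp
    then show "odd (rk D r)" using i(2) by simp
  qed
  have Ru: "\<And>r. r \<in> D \<Longrightarrow> r \<notin> S' \<Longrightarrow> odd (uu D r)"
    using Rrk par by fastforce
  have Sp: "\<And>x. x \<in> D \<Longrightarrow> even (uu D x) \<Longrightarrow> x \<in> S'"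
    using Ru by blast
  have adm_s': "\<And>i. tt D i \<in> {Neg, Zero, s' i}"
  proof -
    fix i show "tt D i \<in> {Neg, Zero, s' i}"
    proof (cases "tt D i")
      case Pos
      then have "i \<in> S'" using tt_pos[OF Pos] Sp by blast
      then have "s' i = Pos" using assms(2) unfolding S'_def supp_def SSplus_def by auto
      then show ?thesis using Pos by simp
    qed simp_all
  qed
  have "card D \<le> dd s'"
    using SC_tt[OF finD] dd_ge[OF assms(2) tt_SS[OF finD] adm_s'] by linarith
  moreover have "dd s' \<le> dd s" using dd_mono[OF sP assms(2)] assms(3) by auto
  ultimately have ddeq: "dd s' = dd s" using dds by simp
  have "card S' < card D" using psubset_card_mono[OF finD sub] .
  then have notc: "s' \<notin> SSplus_circ" using ddeq dds unfolding SSplus_circ_def S'_def by auto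
  have gap: "\<And>b. b \<in> D \<Longrightarrow> Suc b \<notin> S' \<Longrightarrow> even (uu D b)"
  proof -
    fix b assume b: "b \<in> D" "Suc b \<notin> S'"
    show "even (uu D b)"
    proof (cases "Suc b \<in> D")
      case True
      then have "odd (uu D (Suc b))" using Ru b by blast
      then show ?thesis using uu_step[OF finD b(1) True] by simp
    next
      case False then show ?thesis using uu_top by simp
    qed
  qed
  define Add where "Add = {Min X - 1 | X. max_interval S' X \<and> 0 \<notin> X \<and> odd (card X)}"
  have AddD: "Add \<subseteq> D"
  proof
    fix y assume "y \<in> Add"
    then obtain X where X: "y = Min X - 1" "max_interval S' X" "0 \<notin> X" "odd (card X)"
      unfolding Add_def by blast
    then obtain a b where ab: "a \<le> b" "X = {a..b}" "X \<subseteq> S'" "a = 0 \<or> a - 1 \<notin> S'" "b + 1 \<notin> S'"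
      unfolding max_interval_def by blast
    have a0: "0 < a" using X(3) ab by auto
    have XD: "{a..b} \<subseteq> D" using ab sub by auto
    have "even (b - a)" using X(4) ab by simp
    moreover have "even (uu D b)" using gap XD ab by auto
    ultimately have "even (uu D a)" using uu_interval[OF finD ab(1) XD] by simp
    moreover have "a \<in> D" using XD ab by auto
    ultimately have "a - 1 \<in> D" using ev a0 by blast
    moreover have "Min X = a" using ab by (auto intro!: Min_eqI)
    ultimately show "y \<in> D" using X by simp
  qed
  have RAdd: "D - S' \<subseteq> Add"
  proof
    fix r assume r: "r \<in> D - S'"
    then have ur: "odd (uu D r)" using Ru by blast
    then have r1: "Suc r \<in> D" using uu_top by fastforce
    have "uu D r = Suc (uu D (Suc r))" using uu_step[OF finD _ r1] r by blast
    then have er1: "even (uu D (Suc r))" using ur by simp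
    then have r1S: "Suc r \<in> S'" using Sp r1 by blast
    define B where "B = {z. Suc r \<le> z \<and> {Suc r..z} \<subseteq> S'}"
    have finS: "finite S'" using finD sub by (auto intro: finite_subset)
    have finB: "finite B" unfolding B_def by (rule finite_subset[OF _ finS]) auto
    have neB: "Suc r \<in> B" using r1S unfolding B_def by simp
    define b where "b = Max B"
    have bB: "b \<in> B" using Max_in[OF finB] neB unfolding b_def by auto
    have rb: "Suc r \<le> b" "{Suc r..b} \<subseteq> S'" using bB unfolding B_def by auto
    have b1: "Suc b \<notin> S'"
    proof
      assume "Suc b \<in> S'"
      then have "{Suc r..Suc b} \<subseteq> S'" using rb by (auto simp: le_Suc_eq)
      then have "Suc b \<in> B" using rb unfolding B_def by simp
      then have "Suc b \<le> b" using finB unfolding b_def by simp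
      then show False by simp
    qed
    have XD: "{Suc r..b} \<subseteq> D" using rb sub by auto
    have "b \<in> D" using XD rb by auto
    then have "even (uu D b)" using gap b1 by blast
    then have "even (b - Suc r)" using uu_interval[OF finD rb(1) XD] er1 by simp
    then have oc: "odd (card {Suc r..b})" using rb by simp
    have mi: "max_interval S' {Suc r..b}" unfolding max_interval_def
      using rb b1 r by auto
    have "Min {Suc r..b} = Suc r" using rb by (auto intro!: Min_eqI)
    then have "Min {Suc r..b} - 1 = r" by simp
    then show "r \<in> Add" unfolding Add_def using mi oc by force
  qed
  have "S' \<union> Add = D" using AddD RAdd sub by blast
  then have fl: "sfloor s' = s"
    unfolding sfloor_def using of_supp_supp[OF sP] unfolding Add_def S'_def D_def by simp
  have "{Max X + 1 | X. max_interval D X \<and> 0 \<notin> X \<and> odd (card X)} = {}"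
  proof (rule ccontr)
    assume "{Max X + 1 | X. max_interval D X \<and> 0 \<notin> X \<and> odd (card X)} \<noteq> {}"
    then obtain X where X: "max_interval D X" "0 \<notin> X" "odd (card X)" by blast
    then obtain a b where ab: "a \<le> b" "X = {a..b}" "X \<subseteq> D" "a = 0 \<or> a - 1 \<notin> D" "b + 1 \<notin> D"
      unfolding max_interval_def by blast
    have a0: "0 < a" using X(2) ab by auto
    have "odd (uu D a)" using ev a0 ab by auto
    moreover have "uu D b = 0" using uu_top ab by simp
    ultimately have "odd (b - a)" using uu_interval[OF finD ab(1)] ab by simp
    then show False using X(3) ab by simp
  qed
  then have ce: "sceil s = s" unfolding sceil_def D_def
    by (simp only: Un_empty_right of_supp_supp[OF sP])
  have ne: "s \<noteq> s'" using assms(3) by auto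
  have "preceq0 (sceil s) (sfloor s')" unfolding ce fl preceq0_def using assms(1) by simp
  then have "sprec s s'" unfolding sprec_def spreceq_def using sP assms(2) ne by simp
  then show ?thesis using notc fl ddeq by simp
qed


end
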